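(* Let $f:[1,\infty)\to\mathbb{R}$ be defined by $f(1)=0$ and $$f(x)=\frac{x+1}{2}\log\Big(\frac{x+1}{2}\Big)-\frac{x-1}{2}\log\Big(\frac{x-1}{2}\Big),\qquad x\in(1,\infty).$$ Then: (i) $f$ is continuous, strictly monotone increasing and concave, with $\lim_{x\to1}f'(x)=\infty$; (ii) there exists $C\in(0,1]$ such that $f(x)\le C\sqrt{x^2-1}$ for all $x\in[1,\infty)$; (iii) $f(x)\ge\log(x)$ for all $x\in[1,\infty)$. *)

theory Defs
  imports "HOL-Analysis.Analysis"
begin

definition f_lem :: "real \<Rightarrow> real" where
  "f_lem x = (if x = 1 then 0 else
      (x + 1) / 2 * ln ((x + 1) / 2) - (x - 1) / 2 * ln ((x - 1) / 2))"

end

theory Submission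
  imports Defs
begin

definition FF :: "real \<Rightarrow> real" where
  "FF x = (x + 1) / 2 * ln ((x + 1) / 2) - (x - 1) / 2 * ln ((x - 1) / 2)"

definition DD :: "real \<Rightarrow> real" where
  "DD x = ln ((x + 1) / (x - 1)) / 2"

lemma feq: "f_lem = FF"
  by (rule ext) (simp add: f_lem_def FF_def)

lemma fderiv: assumes "x > 1" shows "(f_lem has_real_derivative DD x) (at x)"
proof -
  have "(FF has_real_derivative
     (1/2 * ln ((x + 1) / 2) + (x + 1) / 2 * (1/2 / ((x+1)/2))) -
     (1/2 * ln ((x - 1) / 2) + (x - 1) / 2 * (1/2 / ((x-1)/2)))) (at x)"
  proof -
    have e: "(4 * x + 4) / (x * 2 + 2) = 2" "(4 * x - 4) / (x * 2 - 2) = 2"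
       "(x + 1) / (2 * x + 2) = 1/2" "(x - 1) / (2 * x - 2) = 1/2" using assms by (simp_all add: field_simps)
    show ?thesis unfolding FF_def using assms
      by (auto intro!: derivative_eq_intros simp: e) (simp add: field_simps)
  qed
  moreover have "(1/2 * ln ((x + 1) / 2) + (x + 1) / 2 * (1/2 / ((x+1)/2))) -
     (1/2 * ln ((x - 1) / 2) + (x - 1) / 2 * (1/2 / ((x-1)/2))) = DD x"
  proof -
    have a: "(x + 1) / 2 * (1/2 / ((x+1)/2)) = 1/2" using assms by simp
    have b: "(x - 1) / 2 * (1/2 / ((x-1)/2)) = 1/2" using assms by simp
    have c: "ln ((x + 1) / 2) - ln ((x - 1) / 2) = ln ((x + 1) / (x - 1))"
      using assms by (simp add: ln_div)
    show ?thesis unfolding a b DD_def using c by simp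
  qed
  ultimately show ?thesis by (simp add: feq)
qed

lemma DD_pos: "x > 1 \<Longrightarrow> DD x > 0"
  unfolding DD_def by (simp add: field_simps)

lemma DD_anti: assumes "1 < u" "u \<le> v" shows "DD v \<le> DD u"
proof -
  have "(v + 1) / (v - 1) \<le> (u + 1) / (u - 1)"
    using assms by (simp add: field_simps)
  moreover have "0 < (v + 1) / (v - 1)" using assms by simp
  ultimately show ?thesis unfolding DD_def by simp
qed

lemma exp_bound: assumes "s \<ge> 0" shows "1 + s\<^sup>2 \<le> exp (s::real)"
proof -
  have a: "1 + s/2 + (s/2)\<^sup>2/2 \<le> exp (s/2)" using exp_lower_Taylor_quadratic assms by simp
  have "1 + s\<^sup>2 \<le> (1 + s/2 + (s/2)\<^sup>2/2)\<^sup>2"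
  proof -
    have "(1 + s/2 + (s/2)\<^sup>2/2)\<^sup>2 - (1 + s\<^sup>2) = s * (((s-2)\<^sup>2 + 4)/8) + s^4/64"
      by (simp add: power2_eq_square power4_eq_xxxx field_simps)
    moreover have "s * (((s-2)\<^sup>2 + 4)/8) \<ge> 0" using assms by simp
    moreover have "s^4/64 \<ge> 0" by simp
    ultimately show ?thesis by linarith
  qed
  also have "\<dots> \<le> (exp (s/2))\<^sup>2" using a assms by (intro power_mono) auto
  also have "\<dots> = exp s" by (simp flip: exp_double)
  finally show ?thesis .
qed

lemma ln_sqrt: assumes "u \<ge> 0" shows "ln (1 + u) \<le> sqrt (u::real)"
proof -
  have "1 + (sqrt u)\<^sup>2 \<le> exp (sqrt u)" using assms by (intro exp_bound) simp
  then have "1 + u \<le> exp (sqrt u)" using assms by simp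
  then show ?thesis using assms using ln_le_cancel_iff[of "1+u" "exp (sqrt u)"] by simp 
qed

lemma xlnx_lim: "((\<lambda>y::real. y * ln y) \<longlongrightarrow> 0) (at_right 0)"
proof (rule Lim_null_comparison)
  show "((\<lambda>y::real. sqrt y) \<longlongrightarrow> 0) (at_right 0)"
    using tendsto_real_sqrt[OF tendsto_ident_at[of "0::real" "{0<..}"]] by simp
  have "\<forall>\<^sub>F y in at_right (0::real). 0 < y \<and> y < 1"
    using eventually_at_right_real[of 0 1] by simp
  then show "\<forall>\<^sub>F y in at_right (0::real). norm (y * ln y) \<le> sqrt y"
  proof eventually_elim
    case (elim y)
    have "ln (1/y) = ln (1 + (1/y - 1))" by simp
    also have "\<dots> \<le> sqrt (1/y - 1)" using elim[THEN conjunct1] elim[THEN conjunct2] by (intro ln_sqrt) (simp add: field_simps)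
    also have "\<dots> \<le> sqrt (1/y)" by simp
    finally have "- ln y \<le> 1 / sqrt y" using elim[THEN conjunct1] elim[THEN conjunct2] by (simp add: ln_div real_sqrt_divide)
    then have "y * (- ln y) \<le> y * (1 / sqrt y)" using elim[THEN conjunct1] elim[THEN conjunct2] by (intro mult_left_mono) auto
    also have "y * (1 / sqrt y) = sqrt y" using elim[THEN conjunct1] real_div_sqrt[of y] by simp
    finally have "- (y * ln y) \<le> sqrt y" by simp
    moreover have "y * ln y \<le> 0" using elim[THEN conjunct1] elim[THEN conjunct2]
      by (intro mult_nonneg_nonpos) auto
    ultimately show ?case by simp
  qed
qed
lemma xlnx_cont: "continuous_on {0..} (\<lambda>y::real. y * ln y)"
proof (rule continuous_on_eq_continuous_within[THEN iffD2], intro ballI)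
  fix y :: real assume "y \<in> {0..}"
  show "continuous (at y within {0..}) (\<lambda>y. y * ln y)"
  proof (cases "y = 0")
    case True
    have "((\<lambda>y::real. y * ln y) \<longlongrightarrow> 0) (at_right 0)" by (rule xlnx_lim)
    then show ?thesis using True
      by (simp add: continuous_within at_within_Ici_at_right)
  next
    case False
    then have "y > 0" using \<open>y \<in> {0..}\<close> by simp
    then have "isCont (\<lambda>y. y * ln y) y" by (auto intro!: continuous_intros)
    then show ?thesis using continuous_at_imp_continuous_at_within by blast
  qed
qed

lemma f_cont: "continuous_on {1..} f_lem"
proof -
  have c1: "continuous_on {1..} (\<lambda>x::real. (x + 1) / 2 * ln ((x + 1) / 2))"
    by (auto intro!: continuous_intros)
  have c2: "continuous_on {1..} (\<lambda>x::real. (x - 1) / 2 * ln ((x - 1) / 2))"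
  proof -
    have "continuous_on {1..} ((\<lambda>y::real. y * ln y) \<circ> (\<lambda>x. (x - 1) / 2))"
      by (rule continuous_on_compose) (auto intro!: continuous_intros continuous_on_subset[OF xlnx_cont])
    then show ?thesis by (simp add: o_def)
  qed
  show ?thesis unfolding feq FF_def using c1 c2 by (intro continuous_on_diff)
qed

lemma f_mono: "strict_mono_on {1..} f_lem"
proof (rule strict_mono_onI)
  fix x y :: real assume "x \<in> {1..}" "y \<in> {1..}" "x < y"
  show "f_lem x < f_lem y"
  proof (rule DERIV_pos_imp_increasing_open[OF \<open>x < y\<close>])
    fix z assume "x < z" "z < y"
    then have "z > 1" using \<open>x \<in> {1..}\<close> by simp
    then show "\<exists>d. DERIV f_lem z :> d \<and> d > 0" using fderiv DD_pos by blast
  next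
    show "continuous_on {x..y} f_lem"
      using f_cont by (rule continuous_on_subset) (use \<open>x \<in> {1..}\<close> in auto)
  qed
qed

lemma f_concave: "concave_on {1..} f_lem"
  unfolding concave_on_def
proof (rule convex_on_linorderI)
  show "convex {1::real..}" by simp
next
  fix t x y :: real
  assume t: "t > 0" "t < 1"
  assume xy: "x \<in> {1..}" "y \<in> {1..}" "x < y"
  define z where "z = (1 - t) * x + t * y"
  from xy t have xz: "z > x" by (simp add: z_def algebra_simps)
  have "y - z = (1 - t) * (y - x)" by (simp add: z_def algebra_simps)
  also from xy t have "\<dots> > 0" by (intro mult_pos_pos) simp_all
  finally have yz: "z < y" by simp
  have dif: "\<And>w. x < w \<Longrightarrow> f_lem differentiable (at w)"
  proof -
    fix w assume "x < w"
    then have "w > 1" using xy by simp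
    then show "f_lem differentiable (at w)" using fderiv real_differentiable_def by blast
  qed
  have cxz: "continuous_on {x..z} f_lem"
    using f_cont by (rule continuous_on_subset) (use xy in auto)
  have czy: "continuous_on {z..y} f_lem"
    using f_cont by (rule continuous_on_subset) (use xy xz in auto)
  obtain l1 \<xi> where \<xi>: "x < \<xi>" "\<xi> < z" "DERIV f_lem \<xi> :> l1" "f_lem z - f_lem x = (z - x) * l1"
    using MVT[OF xz cxz] dif by auto
  obtain l2 \<eta> where \<eta>: "z < \<eta>" "\<eta> < y" "DERIV f_lem \<eta> :> l2" "f_lem y - f_lem z = (y - z) * l2"
    using MVT[OF yz czy] dif xz by auto
  have "l1 = DD \<xi>" using DERIV_unique[OF \<xi>(3) fderiv] \<xi> xy by auto
  moreover have "l2 = DD \<eta>" using DERIV_unique[OF \<eta>(3) fderiv] \<eta> xy xz by auto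
  moreover have "DD \<eta> \<le> DD \<xi>" using DD_anti \<xi> \<eta> xy by auto
  ultimately have "l2 \<le> l1" by simp
  then have "(f_lem y - f_lem z) * (z - x) \<le> (f_lem z - f_lem x) * (y - z)"
    using \<xi>(4) \<eta>(4) xz yz by (simp add: mult_left_mono)
  also have "z - x = t * (y - x)" by (simp add: z_def algebra_simps)
  also have "y - z = (1 - t) * (y - x)" by (simp add: z_def algebra_simps)
  finally have "(f_lem y - f_lem z) * t \<le> (f_lem z - f_lem x) * (1 - t)"
    using xy by simp
  then show "- f_lem ((1 - t) *\<^sub>R x + t *\<^sub>R y) \<le> (1 - t) * - f_lem x + t * - f_lem y"
    by (simp add: z_def algebra_simps)
qed

lemma f_lim: "filterlim (deriv f_lem) at_top (at_right 1)"
proof -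
  have "filterlim (\<lambda>x::real. ln ((x+1)/(x-1))/2) at_top (at_right 1)"
  proof -
  have a: "filterlim (\<lambda>x::real. x - 1) (at_right 0) (at_right 1)"
    unfolding filterlim_at
  proof
    show "\<forall>\<^sub>F x in at_right 1. x - 1 \<in> {0<..} \<and> x - 1 \<noteq> (0::real)"
      using eventually_at_right_less[of "1::real"] by (rule eventually_mono) simp
    show "((\<lambda>x::real. x - 1) \<longlongrightarrow> 0) (at_right 1)"
      using tendsto_diff[OF tendsto_ident_at[of "1::real" "{1<..}"] tendsto_const[of "1::real"]] by simp
  qed
  have b: "filterlim (\<lambda>x::real. inverse (x - 1)) at_top (at_right 1)"
    using filterlim_compose[OF filterlim_inverse_at_top_right a] .
  have c: "filterlim (\<lambda>x::real. (x + 1) * inverse (x - 1)) at_top (at_right 1)"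
  proof -
    have "((\<lambda>x::real. x + 1) \<longlongrightarrow> 2) (at_right 1)"
      using tendsto_add[OF tendsto_ident_at[of "1::real" "{1<..}"] tendsto_const[of "1::real"]] by simp
    then show ?thesis by (rule filterlim_tendsto_pos_mult_at_top[OF _ _ b]) simp
  qed
  have d: "filterlim (\<lambda>x::real. ln ((x + 1) * inverse (x - 1))) at_top (at_right 1)"
    using filterlim_compose[OF ln_at_top c] .
  show ?thesis
    unfolding divide_inverse
    by (rule filterlim_at_top_mult_tendsto_pos[OF tendsto_const _ d]) simp
qed
  then have lim: "filterlim DD at_top (at_right 1)" unfolding DD_def .
  have ev: "eventually (\<lambda>x. DD x = deriv f_lem x) (at_right 1)"
  proof -
    have "eventually (\<lambda>x. x > 1) (at_right (1::real))" by (simp add: eventually_at_right_less)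
    then show ?thesis proof eventually_elim
      case (elim x) show ?case using DERIV_imp_deriv[OF fderiv[OF elim]] by simp
    qed
  qed
  show ?thesis using filterlim_cong[OF refl refl ev] lim by (rule iffD1)
qed

lemma f_b: assumes "b > 0" shows "f_lem (2*b+1) = ln (b+1) + b * (ln (b+1) - ln b)"
proof -
  have e: "(2*b+1+1)/2 = b+1" "(2*b+1-1)/2 = b" by simp_all
  show ?thesis by (simp only: feq FF_def e) (simp add: algebra_simps)
qed

lemma f_upper: assumes "x \<ge> 1" shows "f_lem x \<le> 1 * sqrt (x\<^sup>2 - 1)"
proof (cases "x = 1")
  case True then show ?thesis by (simp add: f_lem_def)
next
  case False
  define b where "b = (x - 1) / 2"
  have b: "b > 0" using False assms by (simp add: b_def)
  have x: "x = 2*b+1" by (simp add: b_def field_simps)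
  have h1: "ln (1 + b) \<le> sqrt b" using ln_sqrt b by simp
  have "1 + 1/b = (b+1)/b" using b by (simp add: field_simps)
  then have "ln (b+1) - ln b = ln (1 + 1/b)" using b by (simp add: ln_div)
  also have "\<dots> \<le> sqrt (1/b)" using ln_sqrt b by simp
  finally have "b * (ln (b+1) - ln b) \<le> b * sqrt (1/b)" using b by (simp add: mult_left_mono)
  also have "b * sqrt (1/b) = sqrt b" using b real_div_sqrt[of b] by (simp add: real_sqrt_divide)
  finally have h2: "b * (ln (b+1) - ln b) \<le> sqrt b" .
  have "x\<^sup>2 - 1 = 4 * (b * (b+1))" unfolding x by (simp add: power2_eq_square algebra_simps)
  then have "sqrt (x\<^sup>2 - 1) = 2 * (sqrt b * sqrt (b+1))"
    by (simp add: real_sqrt_mult)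
  moreover have "sqrt b \<le> sqrt b * sqrt (b+1)"
    using b by (simp add: mult_le_cancel_left1)
  ultimately show ?thesis unfolding x using f_b[OF b] h1 h2 by (simp add: add.commute)
qed

lemma f_lower: assumes "x \<ge> 1" shows "ln x \<le> f_lem x"
proof (cases "x = 1")
  case True then show ?thesis by (simp add: f_lem_def)
next
  case False
  define b where "b = (x - 1) / 2"
  have b: "b > 0" using False assms by (simp add: b_def)
  have x: "x = 2*b+1" by (simp add: b_def field_simps)
  have "ln (2*b+1) - ln (b+1) = ln ((2*b+1)/(b+1))" using b by (simp add: ln_div)
  also have "\<dots> \<le> (2*b+1)/(b+1) - 1" using b by (intro ln_le_minus_one) simp
  also have "\<dots> = b/(b+1)" using b by (simp add: field_simps)
  finally have h1: "ln (2*b+1) - ln (b+1) \<le> b/(b+1)" .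
  have "ln (b/(b+1)) \<le> b/(b+1) - 1" using b by (intro ln_le_minus_one) simp
  then have "1/(b+1) \<le> ln (b+1) - ln b" using b by (simp add: ln_div field_simps)
  then have "b * (1/(b+1)) \<le> b * (ln (b+1) - ln b)" using b by (intro mult_left_mono) auto
  then have h2: "b/(b+1) \<le> b * (ln (b+1) - ln b)" by simp
  show ?thesis unfolding x using f_b[OF b] h1 h2 by simp
qed

theorem lemma1p7:
  shows "(continuous_on {1..} f_lem \<and> strict_mono_on {1..} f_lem \<and> concave_on {1..} f_lem
          \<and> (\<forall>x>1. f_lem differentiable (at x))
          \<and> filterlim (deriv f_lem) at_top (at_right 1))
       \<and> (\<exists>C::real. 0 < C \<and> C \<le> 1 \<and> (\<forall>x\<ge>1. f_lem x \<le> C * sqrt (x\<^sup>2 - 1)))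
       \<and> (\<forall>x\<ge>1. f_lem x \<ge> ln x)"
proof (intro conjI)
  show "\<forall>x>1. f_lem differentiable (at x)"
    using fderiv real_differentiable_def by blast
  show "\<exists>C::real. 0 < C \<and> C \<le> 1 \<and> (\<forall>x\<ge>1. f_lem x \<le> C * sqrt (x\<^sup>2 - 1))"
    using f_upper by (intro exI[of _ 1]) simp
  show "continuous_on {1..} f_lem" by (rule f_cont)
  show "strict_mono_on {1..} f_lem" by (rule f_mono)
  show "concave_on {1..} f_lem" by (rule f_concave)
  show "filterlim (deriv f_lem) at_top (at_right 1)" by (rule f_lim)
  show "\<forall>x\<ge>1. f_lem x \<ge> ln x" using f_lower by blast
qed

end
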